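(* Let $\mu,\nu$ be probability measures on $\mathbb{R}$, let $(X_k)_{k\ge1}$ be i.i.d. with law $\mu$, and $(W_j)_{j\ge1}$ i.i.d. with law $\nu$, independent of $(X_k)$. Fix an integer $M>0$ and set $Y_{(k-1)M+i}:=X_k+W_{(k-1)M+i}$ for $i=1,\dots,M$, $k=1,2,\dots$. Let $(B_n)$ be Borel subsets of $\mathbb{R}$ and $\tau\ge 0$, and assume $$\lim_{n\to\infty}\sup_{x\in\mathbb{R}}\nu(B_n+x)=0\qquad\text{and}\qquad\lim_{n\to\infty}n\,(\mu*\nu)(B_n)=\tau.$$ Then $$\lim_{n\to\infty}\mathbb{P}\big(Y_i\notin B_{nM}\text{ for }i=1,2,\dots,nM\big)=e^{-\tau}.$$
   Context: $\mu*\nu$ denotes the convolution of the measures (the law of $X_1+W_1$), and $B_n+x:=\{b+x: b\in B_n\}$. *)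

theory Defs
  imports "HOL-Probability.Probability"
begin

end

theory Submission
  imports Defs "HOL-Probability.Probability"
begin


lemma pow_limit:
  fixes a :: "nat \<Rightarrow> real"
  assumes lim: "(\<lambda>n. real n * a n) \<longlonglongrightarrow> c" and nn: "eventually (\<lambda>n. a n \<ge> 0) sequentially"
  shows "(\<lambda>n. (1 - a n)^n) \<longlonglongrightarrow> exp (- c)"
proof -
  have "(\<lambda>n. (real n * a n) * (1 / real n)) \<longlonglongrightarrow> c * 0"
    by (intro tendsto_mult lim lim_1_over_n)
  moreover have "eventually (\<lambda>n. (real n * a n) * (1 / real n) = a n) sequentially"
    using eventually_gt_at_top[of "0::nat"] by eventually_elim simp
  ultimately have a0: "a \<longlonglongrightarrow> 0" by (simp add: Lim_transform_eventually)
  have ev: "eventually (\<lambda>n. 0 \<le> a n \<and> a n \<le> 1/2) sequentially"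
  proof -
    have "eventually (\<lambda>n. dist (a n) 0 < 1/2) sequentially"
      using a0 by (rule tendstoD) simp
    then show ?thesis using nn by eventually_elim (auto simp: dist_real_def)
  qed
  have up: "(\<lambda>n. - (real n * a n)) \<longlonglongrightarrow> - c" by (intro tendsto_intros lim)
  have "(\<lambda>n. - (real n * a n) - 2 * ((real n * a n) * a n)) \<longlonglongrightarrow> - c - 2 * (c * 0)"
    by (intro tendsto_intros lim a0)
  then have lo: "(\<lambda>n. - (real n * a n) - 2 * ((real n * a n) * a n)) \<longlonglongrightarrow> - c" by simp
  have "(\<lambda>n. real n * ln (1 - a n)) \<longlonglongrightarrow> - c"
  proof (rule tendsto_sandwich[OF _ _ lo up])
    show "eventually (\<lambda>n. - (real n * a n) - 2 * ((real n * a n) * a n) \<le> real n * ln (1 - a n)) sequentially"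
      using ev
    proof eventually_elim
      case (elim n)
      have "- a n - 2 * (a n)\<^sup>2 \<le> ln (1 - a n)" using elim by (intro ln_one_minus_pos_lower_bound) auto
      then have "real n * (- a n - 2 * (a n)\<^sup>2) \<le> real n * ln (1 - a n)" by (intro mult_left_mono) auto
      then show ?case by (simp add: power2_eq_square algebra_simps)
    qed
    show "eventually (\<lambda>n. real n * ln (1 - a n) \<le> - (real n * a n)) sequentially"
      using ev
    proof eventually_elim
      case (elim n)
      have "ln (1 - a n) \<le> - a n" using ln_le_minus_one[of "1 - a n"] elim by auto
      then have "real n * ln (1 - a n) \<le> real n * (- a n)" by (rule mult_left_mono) auto
      then show ?case by simp
    qed
  qed
  then have "(\<lambda>n. exp (real n * ln (1 - a n))) \<longlonglongrightarrow> exp (- c)" by (rule tendsto_exp)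
  moreover have "eventually (\<lambda>n. exp (real n * ln (1 - a n)) = (1 - a n)^n) sequentially"
    using ev
  proof eventually_elim
    case (elim n)
    then have "1 - a n > 0" by auto
    then show ?case by (simp add: exp_of_nat_mult)
  qed
  ultimately show ?thesis by (rule Lim_transform_eventually)
qed



lemma (in prob_space) bonf:
  assumes "finite S" "\<And>i. i \<in> S \<Longrightarrow> G i \<in> events" "c \<ge> 0"
    "\<And>i j. i \<in> S \<Longrightarrow> j \<in> S \<Longrightarrow> i \<noteq> j \<Longrightarrow> prob (G i \<inter> G j) \<le> c"
  shows "prob (\<Union>i\<in>S. G i) \<ge> (\<Sum>i\<in>S. prob (G i)) - real (card S) * real (card S) * c"
  using assms
proof (induction S rule: finite_induct)
  case empty
  then show ?case by simp
next
  case (insert a S)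
  have U: "(\<Union>i\<in>S. G i) \<in> events" using insert by auto
  have Ga: "G a \<in> events" using insert by auto
  have IH: "prob (\<Union>i\<in>S. G i) \<ge> (\<Sum>i\<in>S. prob (G i)) - real (card S) * real (card S) * c"
    using insert by auto
  have "prob ((\<Union>i\<in>S. G i) \<inter> G a) = prob (\<Union>i\<in>S. G i \<inter> G a)" by (simp add: Int_UN_distrib2)
  also have "\<dots> \<le> (\<Sum>i\<in>S. prob (G i \<inter> G a))"
    using insert by (intro finite_measure_subadditive_finite) auto
  also have "\<dots> \<le> (\<Sum>i\<in>S. c)" using insert by (intro sum_mono) auto
  finally have I: "prob ((\<Union>i\<in>S. G i) \<inter> G a) \<le> real (card S) * c" by simp
  have "prob (\<Union>i\<in>insert a S. G i) = prob ((\<Union>i\<in>S. G i) \<union> G a)" by (simp add: Un_commute)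
  also have "\<dots> = prob (\<Union>i\<in>S. G i) + prob (G a) - prob ((\<Union>i\<in>S. G i) \<inter> G a)"
    using U Ga by (intro measure_Un3) (auto simp: fmeasurable_eq_sets)
  finally have E: "prob (\<Union>i\<in>insert a S. G i) = prob (\<Union>i\<in>S. G i) + prob (G a) - prob ((\<Union>i\<in>S. G i) \<inter> G a)" .
  have "real (card S) * real (card S) * c + real (card S) * c \<le> real (card (insert a S)) * real (card (insert a S)) * c"
    using insert by (simp add: algebra_simps mult_nonneg_nonneg)
  then show ?case using E IH I insert by simp
qed



lemma (in prob_space) indep_pair_from:
  assumes "indep_vars (\<lambda>_. borel) Y I" "a \<in> I" "b \<in> I" "a \<noteq> b"
  shows "indep_var borel (Y a) borel (Y b)"
proof -
  have "indep_var (PiM {a} (\<lambda>_. borel)) (\<lambda>\<omega>. restrict (\<lambda>i. Y i \<omega>) {a})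
      (PiM {b} (\<lambda>_. borel)) (\<lambda>\<omega>. restrict (\<lambda>i. Y i \<omega>) {b})"
    by (rule indep_var_restrict) (use assms in auto)
  then have "indep_var borel ((\<lambda>g. g a) \<circ> (\<lambda>\<omega>. restrict (\<lambda>i. Y i \<omega>) {a}))
      borel ((\<lambda>g. g b) \<circ> (\<lambda>\<omega>. restrict (\<lambda>i. Y i \<omega>) {b}))"
    by (rule indep_var_compose) (auto intro!: measurable_component_singleton)
  then show ?thesis by (simp add: comp_def)
qed

lemma (in prob_space) indep_triple_from:
  assumes "indep_vars (\<lambda>_. borel) Y I" "a \<in> I" "b \<in> I" "c \<in> I" "a \<noteq> b" "a \<noteq> c" "b \<noteq> c"
  shows "indep_var (borel \<Otimes>\<^sub>M borel) (\<lambda>\<omega>. (Y a \<omega>, Y b \<omega>)) (borel \<Otimes>\<^sub>M borel) (\<lambda>\<omega>. (Y c \<omega>, 0::real))"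
proof -
  have "indep_var (PiM {a, b} (\<lambda>_. borel)) (\<lambda>\<omega>. restrict (\<lambda>i. Y i \<omega>) {a, b})
      (PiM {c} (\<lambda>_. borel)) (\<lambda>\<omega>. restrict (\<lambda>i. Y i \<omega>) {c})"
    by (rule indep_var_restrict) (use assms in auto)
  then have "indep_var (borel \<Otimes>\<^sub>M borel) ((\<lambda>g. (g a, g b)) \<circ> (\<lambda>\<omega>. restrict (\<lambda>i. Y i \<omega>) {a, b}))
      (borel \<Otimes>\<^sub>M borel) ((\<lambda>g. (g c, 0)) \<circ> (\<lambda>\<omega>. restrict (\<lambda>i. Y i \<omega>) {c}))"
    by (rule indep_var_compose) (auto intro!: measurable_component_singleton measurable_Pair)
  then show ?thesis using assms by (simp add: comp_def)
qed

lemma (in prob_space) pair_sum_law: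
  assumes ind: "indep_var borel X borel W" and lx: "distr M borel X = mu" and lw: "distr M borel W = nu"
    and Bs: "Bs \<in> sets borel"
  shows "prob {\<omega>\<in>space M. X \<omega> + W \<omega> \<in> Bs} = measure (mu \<star> nu) Bs"
proof -
  have rv: "random_variable borel X" "random_variable borel W"
    using ind by (auto dest: indep_var_rv1 indep_var_rv2)
  have J: "mu \<Otimes>\<^sub>M nu = distr M (borel \<Otimes>\<^sub>M borel) (\<lambda>x. (X x, W x))"
    using ind[unfolded indep_var_distribution_eq] lx lw by simp
  have "mu \<star> nu = distr M borel (\<lambda>\<omega>. X \<omega> + W \<omega>)"
    unfolding convolution_def J using rv by (subst distr_distr) (auto simp: comp_def)
  then show ?thesis using rv Bs
    by (simp add: measure_distr vimage_def Int_def conj_commute)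
qed



lemma (in prob_space) triple_law:
  assumes ind2: "indep_var borel X borel W"
    and ind3: "indep_var (borel \<Otimes>\<^sub>M borel) (\<lambda>\<omega>. (X \<omega>, W \<omega>)) (borel \<Otimes>\<^sub>M borel) (\<lambda>\<omega>. (W' \<omega>, 0::real))"
    and lx: "distr M borel X = mu" and lw: "distr M borel W = nu" and lw': "distr M borel W' = nu"
    and Bs: "Bs \<in> sets borel"
    and s: "\<And>x. measure nu {w. x + w \<in> Bs} \<le> s"
  shows "prob {\<omega>\<in>space M. X \<omega> + W \<omega> \<in> Bs \<and> X \<omega> + W' \<omega> \<in> Bs} \<le> s * measure (mu \<star> nu) Bs"
proof -
  have rv: "random_variable borel X" "random_variable borel W"
    using ind2 by (auto dest: indep_var_rv1 indep_var_rv2)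
  have rv3: "random_variable (borel \<Otimes>\<^sub>M borel) (\<lambda>\<omega>. (W' \<omega>, 0::real))"
    using ind3 by (auto dest: indep_var_rv1 indep_var_rv2)
  then have rvW': "random_variable borel W'"
    using measurable_fst''[OF rv3] by simp
  define V where "V = distr M (borel \<Otimes>\<^sub>M borel) (\<lambda>\<omega>. (W' \<omega>, 0::real))"
  have J: "mu \<Otimes>\<^sub>M nu = distr M (borel \<Otimes>\<^sub>M borel) (\<lambda>x. (X x, W x))"
    using ind2[unfolded indep_var_distribution_eq] lx lw by simp
  have J3: "(mu \<Otimes>\<^sub>M nu) \<Otimes>\<^sub>M V = distr M ((borel \<Otimes>\<^sub>M borel) \<Otimes>\<^sub>M (borel \<Otimes>\<^sub>M borel)) (\<lambda>x. ((X x, W x), (W' x, 0)))"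
    using ind3[unfolded indep_var_distribution_eq] J by (simp add: V_def)
  have "prob_space nu" using prob_space_distr[OF rvW'] lw' by simp
  then interpret nu: prob_space nu .
  interpret V: prob_space V unfolding V_def using rv3 by (rule prob_space_distr)
  have "prob_space (mu \<Otimes>\<^sub>M nu)" using prob_space_distr[OF measurable_Pair[OF rv]] J by simp
  then interpret mn: prob_space "mu \<Otimes>\<^sub>M nu" .
  have snn: "0 \<le> s" using order.trans[OF measure_nonneg s] .
  have setsnu: "sets nu = sets borel" using lw' by auto
  have setsV: "sets V = sets (borel \<Otimes>\<^sub>M borel)" by (simp add: V_def)
  have setsmu: "sets mu = sets borel" using lx by auto
  have setsmn: "sets (mu \<Otimes>\<^sub>M nu) = sets (borel \<Otimes>\<^sub>M borel)" by (rule sets_pair_measure_cong[OF setsmu setsnu])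
  define S where "S = {p :: (real \<times> real) \<times> (real \<times> real). fst (fst p) + snd (fst p) \<in> Bs \<and> fst (fst p) + fst (snd p) \<in> Bs}"
  let ?PP = "(borel \<Otimes>\<^sub>M borel) \<Otimes>\<^sub>M (borel \<Otimes>\<^sub>M borel) :: ((real \<times> real) \<times> (real \<times> real)) measure"
  have Ssets: "S \<in> sets ?PP"
  proof -
    have "S = (\<lambda>p. fst (fst p) + snd (fst p)) -` Bs \<inter> space ?PP
         \<inter> ((\<lambda>p. fst (fst p) + fst (snd p)) -` Bs \<inter> space ?PP)"
      by (auto simp: S_def space_pair_measure)
    also have "\<dots> \<in> sets ?PP"
      using Bs by (intro sets.Int measurable_sets[OF _ Bs]) measurable
    finally show ?thesis .
  qed
  have evt: "{\<omega>\<in>space M. X \<omega> + W \<omega> \<in> Bs \<and> X \<omega> + W' \<omega> \<in> Bs} = (\<lambda>x. ((X x, W x), (W' x, 0))) -` S \<inter> space M"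
    by (auto simp: S_def)
  have "emeasure M {\<omega>\<in>space M. X \<omega> + W \<omega> \<in> Bs \<and> X \<omega> + W' \<omega> \<in> Bs}
      = emeasure ((mu \<Otimes>\<^sub>M nu) \<Otimes>\<^sub>M V) S"
    unfolding evt J3 by (rule emeasure_distr[OF measurable_Pair[OF measurable_Pair[OF rv] rv3] Ssets, symmetric])
  also have "\<dots> = (\<integral>\<^sup>+z. emeasure V (Pair z -` S) \<partial>(mu \<Otimes>\<^sub>M nu))"
    using Ssets sets_pair_measure_cong[OF setsmn setsV]
    by (intro V.emeasure_pair_measure_alt) simp
  also have "\<dots> \<le> (\<integral>\<^sup>+z. ennreal s * indicator {z. fst z + snd z \<in> Bs} z \<partial>(mu \<Otimes>\<^sub>M nu))"
  proof (intro nn_integral_mono)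
    fix z :: "real \<times> real"
    show "emeasure V (Pair z -` S) \<le> ennreal s * indicator {z. fst z + snd z \<in> Bs} z"
    proof (cases "fst z + snd z \<in> Bs")
      case True
      then have "Pair z -` S = {w. fst z + w \<in> Bs} \<times> UNIV" by (auto simp: S_def)
      moreover have Ax: "{w. fst z + w \<in> Bs} \<in> sets borel"
      proof -
        have "{w. fst z + w \<in> Bs} = (\<lambda>w. fst z + w) -` Bs \<inter> space borel" by auto
        also have "\<dots> \<in> sets borel" by (intro measurable_sets[OF _ Bs]) measurable
        finally show ?thesis .
      qed
      moreover have "emeasure V ({w. fst z + w \<in> Bs} \<times> UNIV) = emeasure nu {w. fst z + w \<in> Bs}"
      proof -
        have "emeasure V ({w. fst z + w \<in> Bs} \<times> UNIV) =
            emeasure M ((\<lambda>\<omega>. (W' \<omega>, 0::real)) -` ({w. fst z + w \<in> Bs} \<times> UNIV) \<inter> space M)"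
          unfolding V_def using rv3 Ax by (subst emeasure_distr) auto
        also have "\<dots> = emeasure M (W' -` {w. fst z + w \<in> Bs} \<inter> space M)" by (auto intro!: arg_cong[where f="emeasure M"])
        also have "\<dots> = emeasure nu {w. fst z + w \<in> Bs}"
          unfolding lw'[symmetric] using rvW' Ax by (subst emeasure_distr) auto
        finally show ?thesis .
      qed
      ultimately show ?thesis using True s[of "fst z"] by (simp add: nu.emeasure_eq_measure ennreal_leI)
    next
      case False
      then have "Pair z -` S = {}" by (auto simp: S_def)
      then show ?thesis by simp
    qed
  qed
  also have "\<dots> = ennreal s * emeasure (mu \<Otimes>\<^sub>M nu) {z. fst z + snd z \<in> Bs}"
  proof -
    have "{z. fst z + snd z \<in> Bs} \<in> sets (mu \<Otimes>\<^sub>M nu)"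
    proof -
      have "{z :: real \<times> real. fst z + snd z \<in> Bs} = (\<lambda>z. fst z + snd z) -` Bs \<inter> space (borel \<Otimes>\<^sub>M borel)"
        by (auto simp: space_pair_measure)
      also have "\<dots> \<in> sets (borel \<Otimes>\<^sub>M borel)" by (intro measurable_sets[OF _ Bs]) measurable
      finally show ?thesis using setsmn by simp
    qed
    then show ?thesis by (rule nn_integral_cmult_indicator)
  qed
  also have "emeasure (mu \<Otimes>\<^sub>M nu) {z. fst z + snd z \<in> Bs} = emeasure (mu \<star> nu) Bs"
  proof -
    have "emeasure (mu \<star> nu) Bs = emeasure (mu \<Otimes>\<^sub>M nu) ((\<lambda>(x, y). x + y) -` Bs \<inter> space (mu \<Otimes>\<^sub>M nu))"
      unfolding convolution_def using Bs setsmn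
      by (subst emeasure_distr) (auto simp: measurable_cong_sets[OF setsmn refl])
    also have "(\<lambda>(x, y). x + y) -` Bs \<inter> space (mu \<Otimes>\<^sub>M nu) = {z. fst z + snd z \<in> Bs}"
      using sets_eq_imp_space_eq[OF setsmn] by (auto simp: space_pair_measure)
    finally show ?thesis by simp
  qed
  finally have "emeasure M {\<omega>\<in>space M. X \<omega> + W \<omega> \<in> Bs \<and> X \<omega> + W' \<omega> \<in> Bs}
      \<le> ennreal s * emeasure (mu \<star> nu) Bs" .
  moreover have "emeasure (mu \<star> nu) Bs = ennreal (measure (mu \<star> nu) Bs)"
  proof -
    have "mu \<star> nu = distr (mu \<Otimes>\<^sub>M nu) borel (\<lambda>(x, y). x + y)" by (simp add: convolution_def)
    moreover have "prob_space (distr (mu \<Otimes>\<^sub>M nu) borel (\<lambda>(x, y). x + y))"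
      by (intro mn.prob_space_distr) (simp add: measurable_cong_sets[OF setsmn refl])
    ultimately show ?thesis by (simp add: finite_measure.emeasure_eq_measure prob_space_def)
  qed
  ultimately show ?thesis
    by (simp add: emeasure_eq_measure ennreal_mult[symmetric] snn)
qed



lemma blk_div:
  fixes i k m :: nat
  assumes "m > 0" "k \<ge> 1" "(k-1)*m + 1 \<le> i" "i \<le> k*m"
  shows "(i - 1) div m + 1 = k"
proof -
  obtain j where k: "k = Suc j" using assms(2) by (cases k) auto
  have "(i - 1) div m = j"
    by (rule div_nat_eqI) (use assms k in \<open>auto simp: algebra_simps\<close>)
  then show ?thesis using k by simp
qed

lemma (in prob_space) block_indep:
  fixes X W :: "nat \<Rightarrow> 'a \<Rightarrow> real" and m n :: nat and Bs :: "real set"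
  assumes ind: "indep_vars (\<lambda>_. borel) (case_sum X W) ({1..} <+> {1..})" and m: "m > 0" and n: "n \<ge> 1"
    and Bs: "Bs \<in> sets borel"
  shows "prob (\<Inter>k\<in>{1..n}. {\<omega>\<in>space M. \<forall>i\<in>{(k-1)*m+1..k*m}. X k \<omega> + W i \<omega> \<notin> Bs})
     = (\<Prod>k\<in>{1..n}. prob {\<omega>\<in>space M. \<forall>i\<in>{(k-1)*m+1..k*m}. X k \<omega> + W i \<omega> \<notin> Bs})"
proof -
  define K where "K k = insert (Inl k) (Inr ` {(k-1)*m+1..k*m})" for k :: nat
  have Ksub: "\<And>k. k \<in> {1..n} \<Longrightarrow> K k \<subseteq> {1..} <+> {1..}" by (auto simp: K_def)
  have disj: "disjoint_family_on K {1..n}"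
    unfolding disjoint_family_on_def
  proof (intro ballI impI)
    fix k k' assume kk: "k \<in> {1..n}" "k' \<in> {1..n}" "k \<noteq> k'"
    show "K k \<inter> K k' = {}"
    proof (rule ccontr)
      assume "K k \<inter> K k' \<noteq> {}"
      then obtain i where i: "i \<in> {(k-1)*m+1..k*m}" "i \<in> {(k'-1)*m+1..k'*m}"
        using kk unfolding K_def by blast
      have "(i - 1) div m + 1 = k" using i kk m by (intro blk_div) auto
      moreover have "(i - 1) div m + 1 = k'" using i kk m by (intro blk_div) auto
      ultimately show False using kk by simp
    qed
  qed
  have iv: "indep_vars (\<lambda>k. PiM (K k) (\<lambda>_. borel)) (\<lambda>k \<omega>. restrict (\<lambda>i. case_sum X W i \<omega>) (K k)) {1..n}"
    by (rule indep_vars_restrict[OF ind Ksub disj])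
  define Q where "Q k g = (\<forall>i\<in>{(k-1)*m+1..k*m}. g (Inl k) + g (Inr i) \<notin> Bs)" for k and g :: "nat + nat \<Rightarrow> real"
  have Qm: "{g \<in> space (PiM (K k) (\<lambda>_. borel)). Q k g} \<in> sets (PiM (K k) (\<lambda>_. borel))" if "k \<in> {1..n}" for k
    unfolding Q_def
  proof (intro sets.sets_Collect_finite_All)
    fix i assume i: "i \<in> {(k-1)*m+1..k*m}"
    have f: "(\<lambda>g. g (Inl k) + g (Inr i)) \<in> borel_measurable (PiM (K k) (\<lambda>_. borel :: real measure))"
      using i by (intro borel_measurable_add measurable_component_singleton) (auto simp: K_def)
    have "{x \<in> space borel. x \<notin> Bs} \<in> sets (borel :: real measure)"
    proof -
      have "{x \<in> space borel. x \<notin> Bs} = space borel - Bs" by auto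
      then show ?thesis using Bs by auto
    qed
    then show "{g \<in> space (PiM (K k) (\<lambda>_. borel)). g (Inl k) + g (Inr i) \<notin> Bs} \<in> sets (PiM (K k) (\<lambda>_. borel))"
      by (rule measurable_sets_Collect[OF f])
  qed simp
  have ie: "indep_events (\<lambda>k. {\<omega>\<in>space M. Q k (restrict (\<lambda>i. case_sum X W i \<omega>) (K k))}) {1..n}"
    by (rule indep_eventsI_indep_vars[OF iv Qm])
  have eq: "{\<omega>\<in>space M. Q k (restrict (\<lambda>i. case_sum X W i \<omega>) (K k))}
      = {\<omega>\<in>space M. \<forall>i\<in>{(k-1)*m+1..k*m}. X k \<omega> + W i \<omega> \<notin> Bs}" for k
    by (auto simp: Q_def K_def)
  have "prob (\<Inter>k\<in>{1..n}. {\<omega>\<in>space M. Q k (restrict (\<lambda>i. case_sum X W i \<omega>) (K k))})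
     = (\<Prod>k\<in>{1..n}. prob {\<omega>\<in>space M. Q k (restrict (\<lambda>i. case_sum X W i \<omega>) (K k))})"
    using ie[unfolded indep_events_def] n by auto
  then show ?thesis unfolding eq .
qed

lemma Inl_in_Plus_iff[simp]: "Inl a \<in> A <+> B \<longleftrightarrow> a \<in> A" by auto
lemma Inr_in_Plus_iff[simp]: "Inr b \<in> A <+> B \<longleftrightarrow> b \<in> B" by auto

lemma (in prob_space) block_bounds:
  fixes X W :: "nat \<Rightarrow> 'a \<Rightarrow> real" and m k :: nat and Bs :: "real set"
  assumes ind: "indep_vars (\<lambda>_. borel) (case_sum X W) ({1..} <+> {1..})"
    and lawX: "\<And>k. k \<ge> 1 \<Longrightarrow> distr M borel (X k) = mu"
    and lawW: "\<And>j. j \<ge> 1 \<Longrightarrow> distr M borel (W j) = nu"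
    and m: "m > 0" and Bs: "Bs \<in> sets borel" and k: "k \<ge> 1"
    and s: "\<And>x. measure nu {w. x + w \<in> Bs} \<le> s" and snn: "s \<ge> 0"
  shows "1 - real m * measure (mu \<star> nu) Bs \<le> prob {\<omega>\<in>space M. \<forall>i\<in>{(k-1)*m+1..k*m}. X k \<omega> + W i \<omega> \<notin> Bs}"
    and "prob {\<omega>\<in>space M. \<forall>i\<in>{(k-1)*m+1..k*m}. X k \<omega> + W i \<omega> \<notin> Bs}
          \<le> 1 - (real m * measure (mu \<star> nu) Bs - real m * real m * (s * measure (mu \<star> nu) Bs))"
proof -
  define q where "q = measure (mu \<star> nu) Bs"
  define blk where "blk = {(k-1)*m+1..k*m}"
  define G where "G i = {\<omega>\<in>space M. X k \<omega> + W i \<omega> \<in> Bs}" for i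
  have rvY: "\<And>j. j \<in> {1..} <+> {1..} \<Longrightarrow> case_sum X W j \<in> borel_measurable M"
    using ind unfolding indep_vars_def by auto
  have rvX: "X k \<in> borel_measurable M" using rvY[of "Inl k"] k by auto
  have rvW: "W i \<in> borel_measurable M" if "i \<in> blk" for i
  proof -
    have "i \<in> {1..}" using that by (auto simp: blk_def)
    then show ?thesis using rvY[OF InrI[of i]] by simp
  qed
  have Gev: "\<And>i. i \<in> blk \<Longrightarrow> G i \<in> events"
  proof -
    fix i assume i: "i \<in> blk"
    have f: "(\<lambda>\<omega>. X k \<omega> + W i \<omega>) \<in> borel_measurable M" using rvX rvW[OF i] by (rule borel_measurable_add)
    have "{x \<in> space borel. x \<in> Bs} \<in> sets (borel :: real measure)" using Bs by simp
    then show "G i \<in> events" unfolding G_def by (rule measurable_sets_Collect[OF f])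
  qed
  have cardb: "card blk = m" unfolding blk_def using k by (cases k) auto
  have finb: "finite blk" by (simp add: blk_def)
  have F: "{\<omega>\<in>space M. \<forall>i\<in>{(k-1)*m+1..k*m}. X k \<omega> + W i \<omega> \<notin> Bs} = space M - (\<Union>i\<in>blk. G i)"
    by (auto simp: G_def blk_def)
  have Uev: "(\<Union>i\<in>blk. G i) \<in> events" using Gev finb by auto
  have PF: "prob {\<omega>\<in>space M. \<forall>i\<in>{(k-1)*m+1..k*m}. X k \<omega> + W i \<omega> \<notin> Bs} = 1 - prob (\<Union>i\<in>blk. G i)"
    unfolding F by (rule prob_compl[OF Uev])
  have pairI: "indep_var borel (X k) borel (W i)" if "i \<in> blk" for i
    using indep_pair_from[OF ind, of "Inl k" "Inr i"] that k by (auto simp: blk_def)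
  have PG: "prob (G i) = q" if i: "i \<in> blk" for i
  proof -
    have "i \<ge> 1" using i by (auto simp: blk_def)
    then show ?thesis unfolding G_def q_def using pairI[OF i] lawX[OF k] lawW Bs by (intro pair_sum_law) auto
  qed
  have PGG: "prob (G i \<inter> G j) \<le> s * q" if i: "i \<in> blk" and j: "j \<in> blk" and ij: "i \<noteq> j" for i j
  proof -
    have ij1: "i \<ge> 1" "j \<ge> 1" using i j by (auto simp: blk_def)
    have t: "indep_var (borel \<Otimes>\<^sub>M borel) (\<lambda>\<omega>. (X k \<omega>, W i \<omega>)) (borel \<Otimes>\<^sub>M borel) (\<lambda>\<omega>. (W j \<omega>, 0::real))"
      using indep_triple_from[OF ind, of "Inl k" "Inr i" "Inr j"] ij1 k ij by auto
    have "G i \<inter> G j = {\<omega>\<in>space M. X k \<omega> + W i \<omega> \<in> Bs \<and> X k \<omega> + W j \<omega> \<in> Bs}" by (auto simp: G_def)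
    also have "prob \<dots> \<le> s * q" unfolding q_def
      by (rule triple_law[OF pairI[OF i] t lawX[OF k] lawW[OF ij1(1)] lawW[OF ij1(2)] Bs s])
    finally show ?thesis .
  qed
  have sumG: "(\<Sum>i\<in>blk. prob (G i)) = real m * q" using PG cardb by simp
  have "prob (\<Union>i\<in>blk. G i) \<le> (\<Sum>i\<in>blk. prob (G i))"
    using finb Gev by (intro finite_measure_subadditive_finite) auto
  then show "1 - real m * measure (mu \<star> nu) Bs \<le> prob {\<omega>\<in>space M. \<forall>i\<in>{(k-1)*m+1..k*m}. X k \<omega> + W i \<omega> \<notin> Bs}"
    using PF sumG by (simp add: q_def)
  have qnn: "q \<ge> 0" by (simp add: q_def)
  have "prob (\<Union>i\<in>blk. G i) \<ge> (\<Sum>i\<in>blk. prob (G i)) - real (card blk) * real (card blk) * (s * q)"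
    using finb Gev PGG snn qnn by (intro bonf) auto
  then show "prob {\<omega>\<in>space M. \<forall>i\<in>{(k-1)*m+1..k*m}. X k \<omega> + W i \<omega> \<notin> Bs}
          \<le> 1 - (real m * measure (mu \<star> nu) Bs - real m * real m * (s * measure (mu \<star> nu) Bs))"
    using PF sumG cardb by (simp add: q_def)
qed

theorem theorem34:
  fixes P :: "'a measure" and mu nu :: "real measure"
    and X W :: "nat \<Rightarrow> 'a \<Rightarrow> real"
    and M :: nat and B :: "nat \<Rightarrow> real set" and \<tau> :: real
  assumes P: "prob_space P"
    and mu: "prob_space mu" "sets mu = sets borel"
    and nu: "prob_space nu" "sets nu = sets borel"
    and indep: "prob_space.indep_vars P (\<lambda>_. borel) (case_sum X W) ({1..} <+> {1..})"
    and lawX: "\<And>k. k \<ge> 1 \<Longrightarrow> distr P borel (X k) = mu"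
    and lawW: "\<And>j. j \<ge> 1 \<Longrightarrow> distr P borel (W j) = nu"
    and M: "M > 0"
    and B: "\<And>n. B n \<in> sets borel"
    and tau: "\<tau> \<ge> 0"
    and shift: "(\<lambda>n. SUP x::real. measure nu ((\<lambda>b. b + x) ` B n)) \<longlonglongrightarrow> 0"
    and conv: "(\<lambda>n. real n * measure (mu \<star> nu) (B n)) \<longlonglongrightarrow> \<tau>"
  shows "(\<lambda>n. measure P {\<omega> \<in> space P. \<forall>i\<in>{1..n*M}.
            X ((i - 1) div M + 1) \<omega> + W i \<omega> \<notin> B (n*M)}) \<longlonglongrightarrow> exp (- \<tau>)"
proof -
  interpret P: prob_space P by (rule P)
  define q where "q n = measure (mu \<star> nu) (B (n*M))" for n
  define s where "s n = (SUP x::real. measure nu ((\<lambda>b. b + x) ` B (n*M)))" for n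
  define F where "F n k = {\<omega>\<in>space P. \<forall>i\<in>{(k-1)*M+1..k*M}. X k \<omega> + W i \<omega> \<notin> B (n*M)}" for n k
  define E where "E n = {\<omega> \<in> space P. \<forall>i\<in>{1..n*M}. X ((i - 1) div M + 1) \<omega> + W i \<omega> \<notin> B (n*M)}" for n
  have sb: "measure nu {w. x + w \<in> B (n*M)} \<le> s n" for n x
  proof -
    have eq: "{w. x + w \<in> B (n*M)} = (\<lambda>b. b + (-x)) ` B (n*M)"
    proof (intro set_eqI iffI)
      fix w assume "w \<in> {w. x + w \<in> B (n*M)}"
      then show "w \<in> (\<lambda>b. b + (-x)) ` B (n*M)" by (intro image_eqI[of _ _ "x + w"]) auto
    next
      fix w assume "w \<in> (\<lambda>b. b + (-x)) ` B (n*M)"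
      then show "w \<in> {w. x + w \<in> B (n*M)}" by auto
    qed
    have bdd: "bdd_above (range (\<lambda>x. measure nu ((\<lambda>b. b + x) ` B (n*M))))"
      by (intro bdd_aboveI[of _ 1]) (auto intro: prob_space.prob_le_1[OF nu(1)])
    have "measure nu ((\<lambda>b. b + (-x)) ` B (n*M)) \<le> s n"
      unfolding s_def by (rule cSUP_upper[OF UNIV_I bdd])
    then show ?thesis unfolding eq .
  qed
  have snn: "s n \<ge> 0" for n using order.trans[OF measure_nonneg sb] .
  have qnn: "q n \<ge> 0" for n by (simp add: q_def)
  have Eeq: "E n = (\<Inter>k\<in>{1..n}. F n k)" if n: "n \<ge> 1" for n
  proof (intro set_eqI iffI)
    fix \<omega> assume w: "\<omega> \<in> E n"
    show "\<omega> \<in> (\<Inter>k\<in>{1..n}. F n k)"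
    proof (intro INT_I)
      fix k assume k: "k \<in> {1..n}"
      show "\<omega> \<in> F n k" unfolding F_def
      proof (intro CollectI conjI ballI)
        show "\<omega> \<in> space P" using w by (simp add: E_def)
        fix i assume i: "i \<in> {(k-1)*M+1..k*M}"
        have d: "(i - 1) div M + 1 = k" using i k M by (intro blk_div) auto
        have km: "k * M \<le> n * M" using k by (intro mult_le_mono1) auto
        have i2: "i \<le> k*M" "1 \<le> i" using i by auto
        have "i \<le> n*M" using i2(1) km by (rule order.trans)
        then have "i \<in> {1..n*M}" using i2 by simp
        then show "X k \<omega> + W i \<omega> \<notin> B (n*M)" using w d by (auto simp: E_def)
      qed
    qed
  next
    fix \<omega> assume w: "\<omega> \<in> (\<Inter>k\<in>{1..n}. F n k)"
    show "\<omega> \<in> E n" unfolding E_def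
    proof (intro CollectI conjI ballI)
      show "\<omega> \<in> space P" using w n by (auto simp: F_def)
      fix i assume i: "i \<in> {1..n*M}"
      define k where "k = (i - 1) div M + 1"
      define d where "d = (i - 1) div M"
      define r where "r = (i - 1) mod M"
      have dm: "d * M + r = i - 1" unfolding d_def r_def by (rule div_mult_mod_eq)
      have ml: "r < M" unfolding r_def using M by simp
      have kd: "k = d + 1" by (simp add: k_def d_def)
      have "(i - 1) div M < n" using i M by (auto simp: div_less_iff_less_mult)
      then have k1: "k \<in> {1..n}" by (auto simp: k_def)
      have e1: "(k-1)*M = d*M" using kd by simp
      have e2: "k*M = d*M + M" using kd by (simp add: algebra_simps)
      have i1: "1 \<le> i" using i by simp
      have "(k-1)*M + 1 \<le> i" "i \<le> k*M" unfolding e1 e2 using dm ml i1 by linarith+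
      then have "i \<in> {(k-1)*M+1..k*M}" by simp
      then show "X ((i - 1) div M + 1) \<omega> + W i \<omega> \<notin> B (n*M)" using w k1 by (auto simp: F_def k_def)
    qed
  qed
  have PE: "P.prob (E n) = (\<Prod>k\<in>{1..n}. P.prob (F n k))" if n: "n \<ge> 1" for n
    unfolding Eeq[OF n] F_def by (rule P.block_indep[OF indep M n B])
  have Fb1: "1 - real M * q n \<le> P.prob (F n k)" if "k \<ge> 1" for n k
    unfolding F_def q_def by (rule P.block_bounds(1)[OF indep lawX lawW M B that sb snn])
  have Fb2: "P.prob (F n k) \<le> 1 - (real M * q n - real M * real M * (s n * q n))" if "k \<ge> 1" for n k
    unfolding F_def q_def by (rule P.block_bounds(2)[OF indep lawX lawW M B that sb snn])
  have sm: "strict_mono (\<lambda>n::nat. n*M)" using M by (auto simp: strict_mono_def)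
  have c1: "(\<lambda>n. real n * (real M * q n)) \<longlonglongrightarrow> \<tau>"
  proof -
    have "(\<lambda>n. real (n*M) * measure (mu \<star> nu) (B (n*M))) \<longlonglongrightarrow> \<tau>"
      using LIMSEQ_subseq_LIMSEQ[OF conv sm] by (simp add: comp_def)
    then show ?thesis by (simp add: q_def mult.assoc)
  qed
  have s0: "s \<longlonglongrightarrow> 0"
    unfolding s_def using LIMSEQ_subseq_LIMSEQ[OF shift sm] by (simp add: comp_def)
  have c2: "(\<lambda>n. real n * (real M * q n - real M * real M * (s n * q n))) \<longlonglongrightarrow> \<tau>"
  proof -
    have "(\<lambda>n. (real n * (real M * q n)) * (1 - real M * s n)) \<longlonglongrightarrow> \<tau> * (1 - real M * 0)"
      by (intro tendsto_intros c1 s0)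
    then show ?thesis by (simp add: algebra_simps)
  qed
  have evs: "eventually (\<lambda>n. s n < 1 / real M) sequentially"
    using order_tendstoD(2)[OF s0] M by simp
  have evb: "eventually (\<lambda>n. 0 \<le> real M * q n - real M * real M * (s n * q n)) sequentially"
    using evs
  proof eventually_elim
    case (elim n)
    then have "real M * s n \<le> 1" using M by (simp add: field_simps)
    then have "0 \<le> 1 - real M * s n" by simp
    then have "0 \<le> (real M * q n) * (1 - real M * s n)" using qnn by simp
    then show ?case by (simp add: algebra_simps)
  qed
  have L1: "(\<lambda>n. (1 - real M * q n)^n) \<longlonglongrightarrow> exp (- \<tau>)"
    by (rule pow_limit[OF c1]) (simp add: qnn)
  have L2: "(\<lambda>n. (1 - (real M * q n - real M * real M * (s n * q n)))^n) \<longlonglongrightarrow> exp (- \<tau>)"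
    by (rule pow_limit[OF c2 evb])
  have a0: "(\<lambda>n. real M * q n) \<longlonglongrightarrow> 0"
  proof -
    have "(\<lambda>n. (real n * (real M * q n)) * (1 / real n)) \<longlonglongrightarrow> \<tau> * 0"
      by (intro tendsto_mult c1 lim_1_over_n)
    moreover have "eventually (\<lambda>n. (real n * (real M * q n)) * (1 / real n) = real M * q n) sequentially"
      using eventually_gt_at_top[of "0::nat"] by eventually_elim simp
    ultimately show ?thesis by (simp add: Lim_transform_eventually)
  qed
  have eva: "eventually (\<lambda>n. real M * q n \<le> 1) sequentially"
    using order_tendstoD(2)[OF a0, of 1] by (auto elim: eventually_mono)
  have lower: "eventually (\<lambda>n. (1 - real M * q n)^n \<le> P.prob (E n)) sequentially"
    using eva eventually_ge_at_top[of "1::nat"]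
  proof eventually_elim
    case (elim n)
    have "(1 - real M * q n)^n = (\<Prod>k\<in>{1..n}. (1 - real M * q n))" by simp
    also have "\<dots> \<le> (\<Prod>k\<in>{1..n}. P.prob (F n k))"
      using elim Fb1 by (intro prod_mono) auto
    finally show ?case using PE[of n] elim by simp
  qed
  have upper: "eventually (\<lambda>n. P.prob (E n) \<le> (1 - (real M * q n - real M * real M * (s n * q n)))^n) sequentially"
    using eventually_ge_at_top[of "1::nat"]
  proof eventually_elim
    case (elim n)
    have "(\<Prod>k\<in>{1..n}. P.prob (F n k)) \<le> (\<Prod>k\<in>{1..n}. (1 - (real M * q n - real M * real M * (s n * q n))))"
      using Fb2 by (intro prod_mono) auto
    also have "\<dots> = (1 - (real M * q n - real M * real M * (s n * q n)))^n" by simp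
    finally show ?case using PE[of n] elim by simp
  qed
  have "(\<lambda>n. P.prob (E n)) \<longlonglongrightarrow> exp (- \<tau>)"
    by (rule tendsto_sandwich[OF lower upper L1 L2])
  then show ?thesis by (simp add: E_def)
qed

end
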